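(* Let $\mathcal{B}=(v_1,\dots,v_N)$ with $v_1,\dots,v_N$ independent and uniform in $\mathbb{F}_2^n$. For $k\in\{1,\dots,n\}$ let $C^k\in\mathbb{F}_2^N$ be the $k$-th column, $C^k_j=(v_j)_k$, and define the equivalence relation $k\sim_{\mathcal B}j$ iff $C^k=C^j$ or $C^k=1-C^j$ (componentwise complement). Let $|I|$ be the number of equivalence classes of $\sim_{\mathcal B}$ on $\{1,\dots,n\}$. Then for $i=1,\dots,n$, $$\mathbb{P}(|I|=i)=\frac{1}{2^{(N-1)(n-i)}}\sum_{(n_1,\dots,n_i)\in S^i_{n-i}}\ \prod_{j=1}^i j^{n_j}\left(1-\frac{j-1}{2^{N-1}}\right),$$ where $S^i_m=\{(n_1,\dots,n_i)\in\mathbb{Z}^i: n_k\ge0,\ \sum_{j=1}^i n_j=m\}$. *)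

theory Defs
  imports "HOL-Probability.Probability"
begin

text \<open>A family B = (v_1,...,v_N) of vectors in F_2^n is modelled as a function
  B :: nat => nat => bool with B j k = (v_j)_k for j in {1..N}, k in {1..n}
  (bool standing for F_2), extensional outside these index ranges.\<close>

definition rand_family :: "nat \<Rightarrow> nat \<Rightarrow> (nat \<Rightarrow> nat \<Rightarrow> bool) pmf" where
  "rand_family N n = Pi_pmf {1..N} undefined (\<lambda>_. pmf_of_set (PiE {1..n} (\<lambda>_. UNIV)))"

definition col :: "nat \<Rightarrow> (nat \<Rightarrow> nat \<Rightarrow> bool) \<Rightarrow> nat \<Rightarrow> nat \<Rightarrow> bool" where
  "col N B k = (\<lambda>j. if j \<in> {1..N} then B j k else undefined)"

definition col_rel :: "nat \<Rightarrow> nat \<Rightarrow> (nat \<Rightarrow> nat \<Rightarrow> bool) \<Rightarrow> (nat \<times> nat) set" where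
  "col_rel N n B = {(k, j). k \<in> {1..n} \<and> j \<in> {1..n} \<and>
      (col N B k = col N B j \<or> (\<forall>l\<in>{1..N}. col N B k l = (\<not> col N B j l)))}"

definition num_classes :: "nat \<Rightarrow> nat \<Rightarrow> (nat \<Rightarrow> nat \<Rightarrow> bool) \<Rightarrow> nat" where
  "num_classes N n B = card ({1..n} // col_rel N n B)"

text \<open>S^i_m as lists (n_1,...,n_i) of naturals (nonnegativity automatic) summing to m.\<close>
definition S_set :: "nat \<Rightarrow> nat \<Rightarrow> nat list set" where
  "S_set i m = {ns. length ns = i \<and> sum_list ns = m}"

end

theory Submission
  imports Defs
begin


fun hh :: "nat \<Rightarrow> nat \<Rightarrow> real" where
  "hh m 0 = (if m = 0 then 1 else 0)"
| "hh m (Suc i) = (\<Sum>a=0..m. real (Suc i) ^ a * hh (m-a) i)"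

definition HH :: "nat \<Rightarrow> nat \<Rightarrow> real" where
  "HH m i = (\<Sum>ns\<in>S_set i m. \<Prod>j=1..i. real j ^ (ns!(j-1)))"

lemma S_set_fin: "finite (S_set i m)"
proof -
  have "S_set i m \<subseteq> {xs. set xs \<subseteq> {0..m} \<and> length xs = i}"
    by (auto simp: S_set_def member_le_sum_list)
  then show ?thesis by (rule finite_subset) (rule finite_lists_length_eq, simp)
qed

lemma S_set_0: "S_set 0 m = (if m = 0 then {[]} else {})"
  by (auto simp: S_set_def)

lemma S_set_Suc: "S_set (Suc i) m = (\<lambda>(a,xs). xs@[a]) ` (SIGMA a:{0..m}. S_set i (m-a))"
proof
  show "S_set (Suc i) m \<subseteq> (\<lambda>(a,xs). xs@[a]) ` (SIGMA a:{0..m}. S_set i (m-a))"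
  proof
    fix ns assume ns: "ns \<in> S_set (Suc i) m"
    then have "ns \<noteq> []" by (auto simp: S_set_def)
    then obtain xs a where e: "ns = xs @ [a]" by (metis rev_exhaust)
    with ns have "length xs = i" "sum_list xs + a = m" by (auto simp: S_set_def)
    then show "ns \<in> (\<lambda>(a,xs). xs@[a]) ` (SIGMA a:{0..m}. S_set i (m-a))"
      using e by (auto simp: S_set_def intro!: image_eqI[where x="(a,xs)"])
  qed
qed (auto simp: S_set_def)

lemma prod_snoc:
  assumes "length xs = i"
  shows "(\<Prod>j=1..Suc i. real j ^ ((xs@[a])!(j-1))) = (\<Prod>j=1..i. real j ^ (xs!(j-1))) * real (Suc i) ^ a"
proof -
  have "(\<Prod>j=1..i. real j ^ ((xs@[a])!(j-1))) = (\<Prod>j=1..i. real j ^ (xs!(j-1)))"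
    using assms by (intro prod.cong refl) (auto simp: nth_append)
  then show ?thesis using assms by (simp add: nth_append)
qed

lemma HH_hh: "HH m i = hh m i"
proof (induction i arbitrary: m)
  case 0
  then show ?case by (simp add: HH_def S_set_0)
next
  case (Suc i)
  have inj: "inj_on (\<lambda>(a,xs). xs@[a]) X" for X :: "(nat \<times> nat list) set"
    by (auto simp: inj_on_def)
  have "HH m (Suc i) = (\<Sum>p\<in>(SIGMA a:{0..m}. S_set i (m-a)). \<Prod>j=1..Suc i. real j ^ (((\<lambda>(a,xs). xs@[a]) p)!(j-1)))"
    unfolding HH_def S_set_Suc by (subst sum.reindex[OF inj]) (simp add: o_def)
  also have "\<dots> = (\<Sum>a\<in>{0..m}. \<Sum>xs\<in>S_set i (m-a). (\<Prod>j=1..i. real j ^ (xs!(j-1))) * real (Suc i) ^ a)"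
    apply (subst sum.Sigma)
      apply (simp_all add: S_set_fin)
    apply (rule sum.cong[OF refl])
    apply (clarsimp simp: S_set_def simp del: prod.cl_ivl_Suc)
    apply (rule prod.cong[OF refl])
    apply (auto simp: nth_append)
    done
  also have "\<dots> = (\<Sum>a\<in>{0..m}. real (Suc i) ^ a * HH (m-a) i)"
    by (simp add: HH_def sum_distrib_left mult.commute)
  also have "\<dots> = hh m (Suc i)" using Suc by simp
  finally show ?case .
qed

lemma hh0: "hh 0 i = 1"
  by (induction i) auto

lemma hh_rec: "hh (Suc m) (Suc i) = hh (Suc m) i + real (Suc i) * hh m (Suc i)"
  by (simp only: hh.simps sum.atLeast0_atMost_Suc_shift) (simp add: sum_distrib_left mult.assoc del: of_nat_Suc)

definition QQ :: "real \<Rightarrow> nat \<Rightarrow> real" where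
  "QQ M i = (\<Prod>j=1..i. (1 - (real j - 1) / M))"

lemma QQ_Suc: "QQ M (Suc i) = QQ M i * (1 - real i / M)"
  by (simp add: QQ_def)

lemma QQ_0: "QQ M 0 = 1" by (simp add: QQ_def)

definition FF :: "real \<Rightarrow> nat \<Rightarrow> nat \<Rightarrow> real" where
  "FF M n i = (1 / M ^ (n - i)) *
    (\<Sum>ns\<in>S_set i (n - i). \<Prod>j=1..i. real j ^ (ns ! (j - 1)) * (1 - (real j - 1) / M))"

lemma FF_alt: "FF M n i = hh (n-i) i * QQ M i / M ^ (n-i)"
  unfolding FF_def HH_hh[symmetric] HH_def QQ_def prod.distrib sum_distrib_right
  by simp

lemma FF_R1:
  assumes M: "M > 0" and i: "1 \<le> i" "i \<le> n"
  shows "FF M (Suc n) i = real i / M * FF M n i + (M - real (i-1)) / M * FF M n (i-1)"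
proof -
  obtain k where k: "i = Suc k" using i by (cases i) auto
  obtain m where m: "n = Suc k + m" using i k by (metis le_Suc_ex)
  have e1: "Suc n - Suc k = Suc m" "n - Suc k = m" "n - k = Suc m" using m by auto
  show ?thesis
    unfolding FF_alt k e1 using M
    by (simp add: e1 hh_rec QQ_Suc field_simps del: hh.simps)
qed

lemma FF_R2:
  assumes M: "M > 0"
  shows "FF M (Suc n) (Suc n) = (M - real n) / M * FF M n n"
  unfolding FF_alt using M by (simp add: hh0 QQ_Suc field_simps del: hh.simps)

lemma FF_Suc0: "FF M (Suc n) 0 = 0"
  by (simp add: FF_def S_set_0)

lemma FF_00: "FF M 0 0 = 1"
  by (simp add: FF_def S_set_0)



lemma quot_card:
  assumes "R = {(k,j). k\<in>A \<and> j\<in>A \<and> f k = f j}"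
  shows "card (A // R) = card (f ` A)"
proof -
  have R: "R `` {x} = {k\<in>A. f k = f x}" if "x\<in>A" for x using that assms by auto
  have "A // R = (\<lambda>x. {k\<in>A. f k = f x}) ` A"
    unfolding quotient_def using R by auto
  also have "\<dots> = (\<lambda>y. {k\<in>A. f k = y}) ` (f ` A)" by (simp add: image_image)
  finally have "A // R = (\<lambda>y. {k\<in>A. f k = y}) ` (f ` A)" .
  moreover have "inj_on (\<lambda>y. {k\<in>A. f k = y}) (f ` A)"
    by (auto simp: inj_on_def)
  ultimately show ?thesis by (simp add: card_image)
qed

lemma card_fib_union:
  assumes "finite V" "S \<subseteq> Y" "\<And>y. y\<in>Y \<Longrightarrow> card {v\<in>V. g v = y} = d" "finite S"
  shows "card {v\<in>V. g v \<in> S} = d * card S"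
proof -
  have "{v\<in>V. g v \<in> S} = (\<Union>y\<in>S. {v\<in>V. g v = y})" by auto
  then have "card {v\<in>V. g v \<in> S} = card (\<Union>y\<in>S. {v\<in>V. g v = y})" by simp
  also have "\<dots> = (\<Sum>y\<in>S. card {v\<in>V. g v = y})"
    using assms by (intro card_UN_disjoint) auto
  also have "\<dots> = (\<Sum>y\<in>S. d)" using assms by (intro sum.cong) auto
  finally show ?thesis by simp
qed

lemma cnt_step:
  fixes g :: "'v \<Rightarrow> 'y" and A :: "'a set"
  assumes finV: "finite V" and gY: "g ` V \<subseteq> Y" and finY: "finite Y"
    and fib: "\<And>y. y\<in>Y \<Longrightarrow> card {v\<in>V. g v = y} = d"
    and finA: "finite A" and a: "a \<notin> A" and i: "i \<ge> 1"
  shows "card {C \<in> PiE (insert a A) (\<lambda>_. V). card (g ` C ` insert a A) = i} =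
     d*i*card {C\<in>PiE A (\<lambda>_. V). card (g ` C ` A) = i} +
     d*(card Y - (i-1)) * card {C\<in>PiE A (\<lambda>_. V). card (g ` C ` A) = i-1}"
proof -
  let ?P = "PiE A (\<lambda>_. V)"
  define S where "S C = g ` C ` A" for C
  define Q where "Q C = {v\<in>V. card (insert (g v) (S C)) = i}" for C
  have img: "g ` (C(a:=v)) ` insert a A = insert (g v) (S C)" for C v
    using a by (auto simp: S_def)
  have eq: "{C \<in> PiE (insert a A) (\<lambda>_. V). card (g ` C ` insert a A) = i} =
      (\<lambda>(C,v). C(a:=v)) ` (SIGMA C:?P. Q C)"
  proof
    show "{C \<in> PiE (insert a A) (\<lambda>_. V). card (g ` C ` insert a A) = i} \<subseteq> (\<lambda>(C,v). C(a:=v)) ` (SIGMA C:?P. Q C)"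
    proof
      fix C assume "C \<in> {C \<in> PiE (insert a A) (\<lambda>_. V). card (g ` C ` insert a A) = i}"
      then have C: "C \<in> PiE (insert a A) (\<lambda>_. V)" "card (g ` C ` insert a A) = i" by auto
      define C' where "C' = C(a:=undefined)"
      have "C' \<in> ?P" using C(1) a unfolding C'_def by (auto simp: PiE_iff extensional_def)
      moreover have "C a \<in> V" using C(1) by auto
      moreover have "C'(a := C a) = C" by (simp add: C'_def)
      moreover have "g ` C ` insert a A = insert (g (C a)) (S C')"
        using img[of C' "C a"] by (simp add: C'_def)
      ultimately show "C \<in> (\<lambda>(C,v). C(a:=v)) ` (SIGMA C:?P. Q C)"
        using C(2) unfolding Q_def by (auto intro!: image_eqI[where x="(C', C a)"])
    qed
  next
    show "(\<lambda>(C,v). C(a:=v)) ` (SIGMA C:?P. Q C) \<subseteq> {C \<in> PiE (insert a A) (\<lambda>_. V). card (g ` C ` insert a A) = i}"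
    proof
      fix y assume "y \<in> (\<lambda>(C,v). C(a:=v)) ` (SIGMA C:?P. Q C)"
      then obtain C v where h: "C \<in> ?P" "v \<in> Q C" and y: "y = C(a:=v)" by auto
      then have "C(a:=v) \<in> PiE (insert a A) (\<lambda>_. V)" using a by (auto simp: Q_def PiE_iff extensional_def)
      moreover have "card (g ` (C(a:=v)) ` insert a A) = i" using h(2) unfolding img Q_def by simp
      ultimately show "y \<in> {C \<in> PiE (insert a A) (\<lambda>_. V). card (g ` C ` insert a A) = i}" using y by blast
    qed
  qed
  have inj: "inj_on (\<lambda>(C,v). C(a:=v)) (SIGMA C:?P. Q C)"
  proof (rule inj_onI, clarify)
    fix C v C' v'
    assume h: "C \<in> ?P" "C' \<in> ?P" "C(a:=v) = C'(a:=v')"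
    have "v = v'" using fun_cong[OF h(3), of a] by simp
    moreover have "C = C'"
    proof
      fix z show "C z = C' z"
        using fun_cong[OF h(3), of z] h(1,2) a by (cases "z = a") (auto simp: PiE_iff extensional_def)
    qed
    ultimately show "C = C' \<and> v = v'" by simp
  qed
  have finP: "finite ?P" using finA finV by (simp add: finite_PiE)
  have card1: "card {C \<in> PiE (insert a A) (\<lambda>_. V). card (g ` C ` insert a A) = i} = (\<Sum>C\<in>?P. card (Q C))"
    unfolding eq using finP finV by (simp add: card_image[OF inj] Q_def)
  have cV: "card V = d * card Y"
  proof -
    have "V = {v\<in>V. g v \<in> Y}" using gY by auto
    then show ?thesis using card_fib_union[OF finV order.refl fib finY] by simp
  qed
  have QC: "card (Q C) = (if card (S C) = i then d*i else 0) + (if card (S C) = i-1 then d*(card Y - (i-1)) else 0)"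
    if C: "C \<in> ?P" for C
  proof -
    have SY: "S C \<subseteq> Y" using C gY by (auto simp: S_def PiE_iff)
    have finS: "finite (S C)" using finA by (simp add: S_def)
    have cin: "card {v\<in>V. g v \<in> S C} = d * card (S C)"
      by (rule card_fib_union[OF finV SY fib finS])
    have "card {v\<in>V. g v \<notin> S C} = card (V - {v\<in>V. g v \<in> S C})"
      by (rule arg_cong[where f=card]) auto
    also have "\<dots> = card V - card {v\<in>V. g v \<in> S C}"
      using finV by (intro card_Diff_subset) auto
    finally have cout: "card {v\<in>V. g v \<notin> S C} = d * (card Y - card (S C))"
      using cin cV by (simp add: diff_mult_distrib2)
    consider "card (S C) = i" | "card (S C) = i - 1" | "card (S C) \<noteq> i" "card (S C) \<noteq> i - 1" by blast
    then show ?thesis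
    proof cases
      case 1
      then have "Q C = {v\<in>V. g v \<in> S C}" using finS unfolding Q_def by (auto simp: card_insert_if)
      then show ?thesis using 1 cin i by simp
    next
      case 2
      then have "Q C = {v\<in>V. g v \<notin> S C}" using finS i unfolding Q_def by (auto simp: card_insert_if)
      then show ?thesis using 2 cout i by simp
    next
      case 3
      then have "Q C = {}" using finS i unfolding Q_def by (auto simp: card_insert_if)
      then show ?thesis using 3 by simp
    qed
  qed
  have "(\<Sum>C\<in>?P. card (Q C)) = (\<Sum>C\<in>?P. (if card (S C) = i then d*i else 0)) + (\<Sum>C\<in>?P. (if card (S C) = i-1 then d*(card Y - (i-1)) else 0))"
    by (simp add: QC sum.distrib)
  also have "\<dots> = d*i*card {C\<in>?P. card (S C) = i} + d*(card Y - (i-1)) * card {C\<in>?P. card (S C) = i-1}"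
    using finP by (simp add: sum.inter_filter[symmetric])
  finally show ?thesis using card1 by (simp add: S_def)
qed



definition cnt :: "('v \<Rightarrow> 'y) \<Rightarrow> 'v set \<Rightarrow> nat \<Rightarrow> nat \<Rightarrow> nat" where
  "cnt g V n i = card {C \<in> PiE {1..n} (\<lambda>_. V). card (g ` C ` {1..n}) = i}"

lemma abstract_main:
  fixes g :: "'v \<Rightarrow> 'y"
  assumes finV: "finite V" and gY: "g ` V = Y"
    and fib: "\<And>y. y\<in>Y \<Longrightarrow> card {v\<in>V. g v = y} = d" and V: "V \<noteq> {}"
  shows "i \<le> n \<Longrightarrow> real (cnt g V n i) / real (card V) ^ n = FF (real (card Y)) n i"
proof -
  have finY: "finite Y" using gY finV by blast
  obtain v0 where v0: "v0 \<in> V" using V by blast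
  have "g v0 \<in> Y" using v0 gY by blast
  then have "card {v\<in>V. g v = g v0} = d" by (rule fib)
  moreover have "{v\<in>V. g v = g v0} \<noteq> {}" using v0 by blast
  moreover have "finite {v\<in>V. g v = g v0}" using finV by simp
  ultimately have dpos: "d > 0" by (metis card_gt_0_iff)
  have cV: "card V = d * card Y"
  proof -
    have "V = {v\<in>V. g v \<in> Y}" using gY by auto
    then show ?thesis using card_fib_union[OF finV order.refl fib finY] by simp
  qed
  have Ypos: "card Y > 0" using cV dpos finV V by (metis card_gt_0_iff mult_is_0 neq0_conv)
  define M where "M = real (card Y)"
  have Mpos: "M > 0" using Ypos by (simp add: M_def)
  define p where "p n i = real (cnt g V n i) / real (card V) ^ n" for n i
  have cnt00: "cnt g V 0 0 = 1" by (simp add: cnt_def)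
  have cntS0: "cnt g V (Suc n) 0 = 0" for n
    by (simp add: cnt_def)
  have cnt_big: "cnt g V n j = 0" if "card Y < j" for n j
  proof -
    have "card (g ` C ` {1..n}) \<le> card Y" if "C \<in> PiE {1..n} (\<lambda>_. V)" for C
      using that gY finY by (intro card_mono) (auto simp: PiE_iff)
    then show ?thesis using \<open>card Y < j\<close> unfolding cnt_def
      by (metis (mono_tags, lifting) Collect_empty_eq card.empty leD)
  qed
  have cnt_big2: "cnt g V n j = 0" if "n < j" for n j
  proof -
    have "card (g ` C ` {1..n}) \<le> n" for C
      by (metis card_atLeastAtMost card_image_le diff_Suc_1 finite_atLeastAtMost finite_imageI order_trans)
    then show ?thesis using \<open>n < j\<close> unfolding cnt_def
      by (metis (mono_tags, lifting) Collect_empty_eq card.empty leD)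
  qed
  have step: "cnt g V (Suc n) i = d*i*cnt g V n i + d*(card Y - (i-1))*cnt g V n (i-1)" if "1 \<le> i" for n i
  proof -
    have e: "{1..Suc n} = insert (Suc n) {1..n}" by (simp add: atLeastAtMostSuc_conv)
    show ?thesis unfolding cnt_def e
      by (rule cnt_step[OF finV _ finY fib]) (use gY that in auto)
  qed
  have rstep: "real (cnt g V (Suc n) i) = real d * real i * cnt g V n i + real d * (M - real (i-1)) * cnt g V n (i-1)"
    if "1 \<le> i" for n i
  proof (cases "i - 1 \<le> card Y")
    case True
    then show ?thesis using step[OF that, of n] by (simp add: M_def of_nat_diff)
  next
    case False
    then show ?thesis using step[OF that, of n] cnt_big[of "i-1" n] by simp
  qed
  have pstep: "p (Suc n) i = real i / M * p n i + (M - real (i-1)) / M * p n (i-1)" if "1 \<le> i" for n i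
    unfolding p_def rstep[OF that] cV using Mpos dpos
    by (simp add: M_def field_simps power_mult_distrib)
  have main: "\<forall>i\<le>n. p n i = FF M n i"
  proof (induction n)
    case 0
    then show ?case by (simp add: p_def cnt00 FF_00)
  next
    case (Suc n)
    show ?case
    proof (intro allI impI)
      fix i assume i: "i \<le> Suc n"
      show "p (Suc n) i = FF M (Suc n) i"
      proof (cases i)
        case 0
        then show ?thesis by (simp add: p_def cntS0 FF_Suc0)
      next
        case (Suc k)
        then have ps: "p (Suc n) i = real i / M * p n i + (M - real k) / M * p n k"
          using pstep[of i n] by simp
        show ?thesis
        proof (cases "i \<le> n")
          case True
          then show ?thesis using ps Suc.IH FF_R1[OF Mpos, of i n] \<open>i = Suc k\<close> by simp
        next
          case False
          then have "i = Suc n" "k = n" using i Suc by auto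
          moreover have "p n (Suc n) = 0" by (simp add: p_def cnt_big2)
          ultimately show ?thesis using ps Suc.IH FF_R2[OF Mpos, of n] by simp
        qed
      qed
    qed
  qed
  then show "i \<le> n \<Longrightarrow> real (cnt g V n i) / real (card V) ^ n = FF (real (card Y)) n i"
    by (simp add: p_def M_def)
qed



definition negc :: "nat \<Rightarrow> (nat \<Rightarrow> bool) \<Rightarrow> (nat \<Rightarrow> bool)" where
  "negc N v = (\<lambda>j\<in>{1..N}. \<not> v j)"

definition cls :: "nat \<Rightarrow> (nat \<Rightarrow> bool) \<Rightarrow> (nat \<Rightarrow> bool) set" where
  "cls N v = {v, negc N v}"

definition Vs :: "nat \<Rightarrow> (nat \<Rightarrow> bool) set" where
  "Vs N = PiE {1..N} (\<lambda>_. UNIV)"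

definition TT :: "nat \<Rightarrow> nat \<Rightarrow> (nat \<Rightarrow> nat \<Rightarrow> bool) \<Rightarrow> nat \<Rightarrow> nat \<Rightarrow> bool" where
  "TT N n B = (\<lambda>k\<in>{1..n}. \<lambda>j\<in>{1..N}. B j k)"

definition UU :: "nat \<Rightarrow> nat \<Rightarrow> (nat \<Rightarrow> nat \<Rightarrow> bool) \<Rightarrow> nat \<Rightarrow> nat \<Rightarrow> bool" where
  "UU N n C = (\<lambda>j\<in>{1..N}. \<lambda>k\<in>{1..n}. C k j)"

lemma negc_V: "negc N v \<in> Vs N" by (simp add: negc_def Vs_def)

lemma negc_negc: "v \<in> Vs N \<Longrightarrow> negc N (negc N v) = v"
  by (auto simp: negc_def Vs_def fun_eq_iff PiE_iff extensional_def)

lemma negc_neq: "N \<ge> 1 \<Longrightarrow> negc N v \<noteq> v"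
  by (auto simp: negc_def fun_eq_iff intro!: exI[where x=1])

lemma cls_eq: "a \<in> Vs N \<Longrightarrow> b \<in> Vs N \<Longrightarrow> cls N a = cls N b \<longleftrightarrow> (a = b \<or> a = negc N b)"
  unfolding cls_def by (auto simp: doubleton_eq_iff negc_negc)

lemma negc_iff: "a \<in> Vs N \<Longrightarrow> a = negc N b \<longleftrightarrow> (\<forall>l\<in>{1..N}. a l = (\<not> b l))"
  by (auto simp: negc_def Vs_def fun_eq_iff PiE_iff extensional_def)

lemma fib2:
  assumes N: "N \<ge> 1" and y: "y \<in> cls N ` Vs N"
  shows "card {v\<in>Vs N. cls N v = y} = 2"
proof -
  obtain v where v: "v \<in> Vs N" "y = cls N v" using y by blast
  have "{w\<in>Vs N. cls N w = y} = {v, negc N v}"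
    using v cls_eq[of _ N v] negc_V[of N v] negc_negc[OF v(1)] by auto
  then show ?thesis using negc_neq[OF N, of v] by auto
qed

lemma key:
  assumes B: "B \<in> PiE {1..N} (\<lambda>_. PiE {1..n} (\<lambda>_. UNIV))"
  shows "num_classes N n B = card (cls N ` TT N n B ` {1..n})"
proof -
  have colT: "col N B k = TT N n B k" if "k \<in> {1..n}" for k
    using that by (simp add: col_def TT_def fun_eq_iff)
  have TV: "TT N n B k \<in> Vs N" if "k \<in> {1..n}" for k
    using that by (simp add: TT_def Vs_def)
  have "col_rel N n B = {(k,j). k \<in> {1..n} \<and> j \<in> {1..n} \<and> (cls N \<circ> TT N n B) k = (cls N \<circ> TT N n B) j}"
  proof -
    have "(k,j) \<in> col_rel N n B \<longleftrightarrow> k \<in> {1..n} \<and> j \<in> {1..n} \<and> (cls N \<circ> TT N n B) k = (cls N \<circ> TT N n B) j" for k j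
    proof (cases "k \<in> {1..n} \<and> j \<in> {1..n}")
      case True
      then show ?thesis
        using colT[of k] colT[of j] cls_eq[OF TV[of k] TV[of j]] negc_iff[OF TV[of k], of "TT N n B j"]
        by (simp add: col_rel_def)
    next
      case False
      then show ?thesis by (auto simp: col_rel_def)
    qed
    then show ?thesis by auto
  qed
  then have "num_classes N n B = card ((cls N \<circ> TT N n B) ` {1..n})"
    unfolding num_classes_def by (rule quot_card)
  then show ?thesis by (simp add: image_comp)
qed

lemma card_transfer:
  "card (PiE {1..N} (\<lambda>_. PiE {1..n} (\<lambda>_. UNIV)) \<inter> {B. num_classes N n B = i}) = cnt (cls N) (Vs N) n i"
proof -
  let ?O = "PiE {1..N} (\<lambda>_. PiE {1..n} (\<lambda>_. UNIV::bool set))"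
  let ?O' = "PiE {1..n} (\<lambda>_. Vs N)"
  have UT: "UU N n (TT N n B) = B" if "B \<in> ?O" for B
    using that by (auto simp: UU_def TT_def fun_eq_iff PiE_iff extensional_def)
  have TU: "TT N n (UU N n C) = C" if "C \<in> ?O'" for C
    using that by (auto simp: UU_def TT_def Vs_def fun_eq_iff PiE_iff extensional_def)
  have TO: "TT N n B \<in> ?O'" for B by (simp add: TT_def Vs_def)
  have UO: "UU N n C \<in> ?O" for C by (simp add: UU_def)
  have "bij_betw (TT N n) (?O \<inter> {B. num_classes N n B = i}) {C \<in> ?O'. card (cls N ` C ` {1..n}) = i}"
  proof (rule bij_betw_byWitness[where f'="UU N n"])
    show "\<forall>a\<in>?O \<inter> {B. num_classes N n B = i}. UU N n (TT N n a) = a" using UT by auto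
    show "\<forall>a'\<in>{C \<in> ?O'. card (cls N ` C ` {1..n}) = i}. TT N n (UU N n a') = a'" using TU by auto
    show "TT N n ` (?O \<inter> {B. num_classes N n B = i}) \<subseteq> {C \<in> ?O'. card (cls N ` C ` {1..n}) = i}"
      using TO key by auto
    show "UU N n ` {C \<in> ?O'. card (cls N ` C ` {1..n}) = i} \<subseteq> ?O \<inter> {B. num_classes N n B = i}"
      using UO key TU by auto
  qed
  then show ?thesis unfolding cnt_def by (rule bij_betw_same_card)
qed



theorem theorem8p5:
  fixes N n i :: nat
  assumes "N \<ge> 1" and "1 \<le> i" and "i \<le> n"
  shows "measure_pmf.prob (rand_family N n) {B. num_classes N n B = i} =
    (1 / 2 ^ ((N - 1) * (n - i))) *
    (\<Sum>ns\<in>S_set i (n - i). \<Prod>j=1..i.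
        real j ^ (ns ! (j - 1)) * (1 - (real j - 1) / 2 ^ (N - 1)))"
proof -
  let ?O = "PiE {1..N} (\<lambda>_. PiE {1..n} (\<lambda>_. UNIV::bool set))"
  have dflt: "PiE_dflt {1..N} undefined (\<lambda>_. PiE {1..n} (\<lambda>_. UNIV::bool set)) = ?O"
    by (auto simp: PiE_dflt_def PiE_def extensional_def Pi_def)
  have rf: "rand_family N n = pmf_of_set ?O"
    unfolding rand_family_def by (subst Pi_pmf_of_set) (auto simp: dflt[simplified] finite_PiE)
  have finO: "finite ?O" by (simp add: finite_PiE)
  have neO: "?O \<noteq> {}" by (simp add: PiE_eq_empty_iff)
  have cO: "card ?O = (2 ^ N) ^ n"
    by (simp add: card_PiE power_mult[symmetric] mult.commute)
  have cV: "card (Vs N) = 2 ^ N" by (simp add: Vs_def card_PiE)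
  have finV: "finite (Vs N)" by (simp add: Vs_def finite_PiE)
  have neV: "Vs N \<noteq> {}" by (simp add: Vs_def PiE_eq_empty_iff)
  have fib: "\<And>y. y \<in> cls N ` Vs N \<Longrightarrow> card {v\<in>Vs N. cls N v = y} = 2"
    using fib2[OF assms(1)] by blast
  have cY: "card (cls N ` Vs N) = 2 ^ (N - 1)"
  proof -
    have "card {v\<in>Vs N. cls N v \<in> cls N ` Vs N} = 2 * card (cls N ` Vs N)"
      by (rule card_fib_union[OF finV order.refl fib finite_imageI[OF finV]])
    moreover have "{v\<in>Vs N. cls N v \<in> cls N ` Vs N} = Vs N" by auto
    ultimately have "2 ^ N = 2 * card (cls N ` Vs N)" using cV by simp
    moreover obtain m where "N = Suc m" using assms(1) by (cases N) auto
    ultimately show ?thesis by simp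
  qed
  have "measure_pmf.prob (rand_family N n) {B. num_classes N n B = i} =
        real (card (?O \<inter> {B. num_classes N n B = i})) / real (card ?O)"
    unfolding rf using finO neO by (simp add: measure_pmf_of_set)
  also have "\<dots> = real (cnt (cls N) (Vs N) n i) / real (card (Vs N)) ^ n"
    by (simp only: card_transfer cO cV of_nat_power)
  also have "\<dots> = FF (real (card (cls N ` Vs N))) n i"
    by (rule abstract_main[OF finV refl fib neV assms(3)])
  also have "\<dots> = FF (2 ^ (N - 1)) n i" by (simp add: cY)
  finally show ?thesis by (simp add: FF_def power_mult)
qed

end
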